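(* Consider the temporally switching linear system with $p\ge 1$ snapshots \[ \dot{x}(t)=A_i x(t)+B u(t),\qquad t\in[t_{i-1},t_i),\quad i=1,\dots,p, \] where $t_0<t_1<\dots<t_p$, $\Delta t_i=t_i-t_{i-1}>0$, $A_i\in\mathbb{R}^{n\times n}$, $B\in\mathbb{R}^{n\times m}$. Let $C_k=[\,B,\ A_kB,\ A_k^2B,\ \dots,\ A_k^{n-1}B\,]$ be the controllability matrix of the pair $(A_k,B)$ and define the temporal controllability matrix \[ \mathcal{C}_T=\big[\,C_p,\ e^{A_p\Delta t_p}C_{p-1},\ e^{A_p\Delta t_p}e^{A_{p-1}\Delta t_{p-1}}C_{p-2},\ \dots,\ e^{A_p\Delta t_p}\cdots e^{A_2\Delta t_2}C_1\,\big]. \] Then the system is completely herdable on $[t_0,t_p]$ if and only if there exists a vector $v\in\mathbb{R}^n$ with all entries strictly positive such that $v\in\operatorname{Im}(\mathcal{C}_T)=\{\mathcal{C}_T y: y\}$.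
   Context: The system is called completely herdable on $[t_0,t_f]$ if for every initial condition $x(t_0)\in\mathbb{R}^n$ and every threshold $h>0$ there exists a piecewise continuous input $u:[t_0,t_f]\to\mathbb{R}^m$ such that the resulting solution satisfies $x_j(t_f)\ge h$ for every node $j\in\{1,\dots,n\}$ simultaneously. *)

theory Defs
  imports "HOL-Analysis.Analysis"
begin

primrec matpow :: "real^'n^'n \<Rightarrow> nat \<Rightarrow> real^'n^'n" where
  "matpow M 0 = mat 1"
| "matpow M (Suc k) = M ** matpow M k"

definition mat_exp :: "real^'n^'n \<Rightarrow> real^'n^'n" where
  "mat_exp M = (\<Sum>k. (1 / fact k) *\<^sub>R matpow M k)"

definition piecewise_continuous_on :: "real \<Rightarrow> real \<Rightarrow> (real \<Rightarrow> 'a::real_normed_vector) \<Rightarrow> bool" where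
  "piecewise_continuous_on a b u \<longleftrightarrow>
     (\<exists>S. finite S \<and> continuous_on ({a..b} - S) u \<and>
        (\<forall>s\<in>S \<inter> {a..b}. (a < s \<longrightarrow> (\<exists>l. (u \<longlongrightarrow> l) (at_left s))) \<and>
                            (s < b \<longrightarrow> (\<exists>r. (u \<longlongrightarrow> r) (at_right s)))))"

text \<open>Solution of the switching system
  x'(t) = A_i x(t) + B u(t) on [t_{i-1}, t_i), i = 1..p (Caratheodory sense,
  written in integral form on each closed snapshot interval; this forces x to be
  continuous, in particular at switching times).\<close>

definition is_switching_solution ::
  "(nat \<Rightarrow> real^'n^'n) \<Rightarrow> real^'m^'n \<Rightarrow> (nat \<Rightarrow> real) \<Rightarrow> nat \<Rightarrow>
   (real \<Rightarrow> real^'m) \<Rightarrow> (real \<Rightarrow> real^'n) \<Rightarrow> bool" where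
  "is_switching_solution A B t p u x \<longleftrightarrow>
     (\<forall>i\<in>{1..p}. \<forall>s\<in>{t (i - 1)..t i}.
        ((\<lambda>\<tau>. A i *v x \<tau> + B *v u \<tau>) has_integral (x s - x (t (i - 1)))) {t (i - 1)..s})"

definition completely_herdable ::
  "(nat \<Rightarrow> real^'n^'n) \<Rightarrow> real^'m^'n \<Rightarrow> (nat \<Rightarrow> real) \<Rightarrow> nat \<Rightarrow> bool" where
  "completely_herdable A B t p \<longleftrightarrow>
     (\<forall>x0 :: real^'n. \<forall>h :: real. h > 0 \<longrightarrow>
        (\<exists>u :: real \<Rightarrow> real^'m. piecewise_continuous_on (t 0) (t p) u \<and>
           (\<exists>x. is_switching_solution A B t p u x \<and> x (t 0) = x0 \<and>
                (\<forall>j. x (t p) $ j \<ge> h))))"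

text \<open>Delta t_i, the transition factor e^{A_p dt_p} ... e^{A_{k+1} dt_{k+1}}
  multiplying C_k in the temporal controllability matrix, and its image.\<close>

definition dt :: "(nat \<Rightarrow> real) \<Rightarrow> nat \<Rightarrow> real" where
  "dt t i = t i - t (i - 1)"

definition transition :: "(nat \<Rightarrow> real^'n^'n) \<Rightarrow> (nat \<Rightarrow> real) \<Rightarrow> nat \<Rightarrow> nat \<Rightarrow> real^'n^'n" where
  "transition A t p k =
     foldl (\<lambda>M j. M ** mat_exp (dt t j *\<^sub>R A j)) (mat 1) (rev [Suc k..<Suc p])"

text \<open>C_T y, where y is split into blocks: y k l \<in> R^m is the block of y
  multiplying the column block A_k^l B of C_k (k = 1..p, l = 0..n-1).\<close>

definition temporal_ctrb_apply ::
  "(nat \<Rightarrow> real^'n^'n) \<Rightarrow> real^'m^'n \<Rightarrow> (nat \<Rightarrow> real) \<Rightarrow> nat \<Rightarrow> (nat \<Rightarrow> nat \<Rightarrow> real^'m) \<Rightarrow> real^'n" where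
  "temporal_ctrb_apply A B t p y =
     (\<Sum>k\<in>{1..p}. \<Sum>l<CARD('n). (transition A t p k ** matpow (A k) l ** B) *v y k l)"

definition temporal_ctrb_image ::
  "(nat \<Rightarrow> real^'n^'n) \<Rightarrow> real^'m^'n \<Rightarrow> (nat \<Rightarrow> real) \<Rightarrow> nat \<Rightarrow> (real^'n) set" where
  "temporal_ctrb_image A B t p = {temporal_ctrb_apply A B t p y | y. True}"

end

theory Submission
  imports Defs
begin
lemma my_matrix_add_rdistrib: "((A::real^'n^'n) + B) ** C = A ** C + B ** C"
  by (simp add: matrix_matrix_mult_def vec_eq_iff sum.distrib distrib_right)

lemma onorm_mat_eq0: "onorm ((*v) (M::real^'n^'n)) = 0 \<longleftrightarrow> M = 0"
proof -
  have "onorm ((*v) M) = 0 \<longleftrightarrow> (\<forall>x. M *v x = 0)"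
    by (rule onorm_eq_0[OF matrix_vector_mul_bounded_linear])
  also have "\<dots> \<longleftrightarrow> M = 0" by (simp add: matrix_eq)
  finally show ?thesis .
qed

lemma mat1_neq0: "(0::real^'a^'a) \<noteq> mat 1"
proof
  assume h: "(0::real^'a^'a) = mat 1"
  have "(mat 1 :: real^'a^'a) $ i $ i = 1" for i by (simp add: mat_def)
  with h show False by (metis vec_lambda_beta zero_index zero_neq_one)
qed

lemma onorm_mat_tri: "onorm ((*v) ((a::real^'n^'n) + b)) \<le> onorm ((*v) a) + onorm ((*v) b)"
proof -
  have "(*v) (a+b) = (\<lambda>x. a *v x + b *v x)" by (rule ext, simp add: matrix_vector_mult_add_rdistrib)
  then show ?thesis using onorm_triangle[OF matrix_vector_mul_bounded_linear matrix_vector_mul_bounded_linear] by simp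
qed

lemma onorm_mat_scale: "onorm ((*v) (r *\<^sub>R (a::real^'n^'n))) = \<bar>r\<bar> * onorm ((*v) a)"
proof -
  have "(*v) (r *\<^sub>R a) = (\<lambda>x. r *\<^sub>R (a *v x))" by (rule ext, simp add: scaleR_matrix_vector_assoc)
  then show ?thesis using onorm_scaleR[OF matrix_vector_mul_bounded_linear] by simp
qed

lemma onorm_mat_mult: "onorm ((*v) ((a::real^'n^'n) ** b)) \<le> onorm ((*v) a) * onorm ((*v) b)"
proof -
  have "(*v) (a ** b) = (*v) a o (*v) b" by (rule ext, simp add: matrix_vector_mul_assoc)
  then show ?thesis using onorm_compose[OF matrix_vector_mul_bounded_linear matrix_vector_mul_bounded_linear] by simp
qed

lemma onorm_mat_one: "onorm ((*v) (mat 1 :: real^'n^'n)) = 1"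
proof -
  have "(*v) (mat 1 :: real^'n^'n) = (\<lambda>x. x)" by (rule ext, simp)
  then show ?thesis using onorm_id by simp
qed

typedef ('n::finite) sq = "UNIV :: (real^'n^'n) set" morphisms mat_of sq_of by simp

setup_lifting type_definition_sq

instantiation sq :: (finite) real_normed_algebra_1
begin
lift_definition zero_sq :: "'a sq" is "0" .
lift_definition plus_sq :: "'a sq \<Rightarrow> 'a sq \<Rightarrow> 'a sq" is "(+)" .
lift_definition minus_sq :: "'a sq \<Rightarrow> 'a sq \<Rightarrow> 'a sq" is "(-)" .
lift_definition uminus_sq :: "'a sq \<Rightarrow> 'a sq" is "uminus" .
lift_definition scaleR_sq :: "real \<Rightarrow> 'a sq \<Rightarrow> 'a sq" is "scaleR" .
lift_definition times_sq :: "'a sq \<Rightarrow> 'a sq \<Rightarrow> 'a sq" is "(**)" .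
lift_definition one_sq :: "'a sq" is "mat 1" .
lift_definition norm_sq :: "'a sq \<Rightarrow> real" is "\<lambda>M. onorm ((*v) M)" .
definition dist_sq :: "'a sq \<Rightarrow> 'a sq \<Rightarrow> real" where "dist_sq a b = norm (a - b)"
definition uniformity_sq :: "('a sq \<times> 'a sq) filter" where
  "uniformity_sq = (INF e\<in>{0 <..}. principal {(x, y). dist x y < e})"
definition open_sq :: "'a sq set \<Rightarrow> bool" where
  "open_sq S = (\<forall>x\<in>S. \<forall>\<^sub>F (x', y) in uniformity. x' = x \<longrightarrow> y \<in> S)"
definition sgn_sq :: "'a sq \<Rightarrow> 'a sq" where "sgn_sq x = scaleR (inverse (norm x)) x"

instance
proof
  fix a b c :: "'a sq" and r s :: real
  show "a + b + c = a + (b + c)" by transfer (simp add: algebra_simps)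
  show "a + b = b + a" by transfer (simp add: algebra_simps)
  show "0 + a = a" by transfer simp
  show "- a + a = 0" by transfer simp
  show "a - b = a + - b" by transfer simp
  show "r *\<^sub>R (a + b) = r *\<^sub>R a + r *\<^sub>R b" by transfer (simp add: algebra_simps)
  show "(r + s) *\<^sub>R a = r *\<^sub>R a + s *\<^sub>R a" by transfer (simp add: algebra_simps)
  show "r *\<^sub>R s *\<^sub>R a = (r * s) *\<^sub>R a" by transfer simp
  show "1 *\<^sub>R a = a" by transfer simp
  show "a * b * c = a * (b * c)" by transfer (simp add: matrix_mul_assoc)
  show "(a + b) * c = a * c + b * c" by transfer (simp add: my_matrix_add_rdistrib)
  show "a * (b + c) = a * b + a * c" by transfer (simp add: matrix_add_ldistrib)
  show "1 * a = a" by transfer simp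
  show "a * 1 = a" by transfer simp
  show "(0::'a sq) \<noteq> 1" by transfer (rule mat1_neq0)
  show "r *\<^sub>R a * b = r *\<^sub>R (a * b)" by transfer (simp add: scalar_matrix_assoc)
  show "a * r *\<^sub>R b = r *\<^sub>R (a * b)" by transfer (simp add: matrix_scalar_ac scalar_matrix_assoc)
  show "dist a b = norm (a - b)" by (simp add: dist_sq_def)
  show "sgn a = inverse (norm a) *\<^sub>R a" by (simp add: sgn_sq_def)
  show "(uniformity :: ('a sq \<times> 'a sq) filter) = (INF e\<in>{0 <..}. principal {(x, y). dist x y < e})"
    by (simp add: uniformity_sq_def)
  fix U :: "'a sq set"
  show "open U = (\<forall>x\<in>U. \<forall>\<^sub>F (x', y) in uniformity. x' = x \<longrightarrow> y \<in> U)"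
    by (simp add: open_sq_def)
  show "norm a = 0 \<longleftrightarrow> a = 0" by transfer (rule onorm_mat_eq0)
  show "norm (a + b) \<le> norm a + norm b"
    by transfer (rule onorm_mat_tri)
  show "norm (r *\<^sub>R a) = \<bar>r\<bar> * norm a"
    by transfer (rule onorm_mat_scale)
  show "norm (a * b) \<le> norm a * norm b"
    by transfer (rule onorm_mat_mult)
  show "norm (1::'a sq) = 1"
    by transfer (rule onorm_mat_one)
qed
end


lemma mat_frob_le_onorm: "norm (M::real^'n^'n) \<le> real CARD('n) * real CARD('n) * onorm ((*v) M)"
proof -
  have "norm M \<le> (\<Sum>i\<in>UNIV. norm (M $ i))" unfolding norm_vec_def by (rule L2_set_le_sum) simp
  also have "\<dots> \<le> (\<Sum>i\<in>(UNIV::'n set). \<Sum>j\<in>(UNIV::'n set). \<bar>M $ i $ j\<bar>)"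
    by (rule sum_mono) (rule norm_le_l1_cart)
  also have "\<dots> \<le> (\<Sum>i\<in>(UNIV::'n set). \<Sum>j\<in>(UNIV::'n set). onorm ((*v) M))"
    by (intro sum_mono matrix_component_le_onorm)
  finally show ?thesis by simp
qed

lemma onorm_le_mat_frob: "onorm ((*v) (M::real^'n^'n)) \<le> real CARD('n) * real CARD('n) * norm M"
proof -
  have "onorm ((*v) M) \<le> (\<Sum>i\<in>(UNIV::'n set). \<Sum>j\<in>(UNIV::'n set). \<bar>M $ i $ j\<bar>)"
    by (rule onorm_le_matrix_component_sum)
  also have "\<dots> \<le> (\<Sum>i\<in>(UNIV::'n set). \<Sum>j\<in>(UNIV::'n set). norm M)"
    by (intro sum_mono) (meson component_le_norm_cart Finite_Cartesian_Product.norm_nth_le order_trans)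
  finally show ?thesis by simp
qed

lemma mat_of_add: "mat_of (a + b) = mat_of a + mat_of b" by transfer simp
lemma mat_of_diff: "mat_of (a - b) = mat_of a - mat_of b" by transfer simp
lemma mat_of_scaleR: "mat_of (r *\<^sub>R a) = r *\<^sub>R mat_of a" by transfer simp
lemma mat_of_mult: "mat_of (a * b) = mat_of a ** mat_of b" by transfer simp
lemma mat_of_one: "mat_of 1 = mat 1" by transfer simp
lemma mat_of_zero: "mat_of 0 = 0" by transfer simp
lemma norm_sq_def': "norm a = onorm ((*v) (mat_of a))" by transfer simp
lemma sq_of_add: "sq_of (a + b) = sq_of a + sq_of b" by (metis mat_of_add sq_of_inverse mat_of_inverse UNIV_I)
lemma sq_of_scaleR: "sq_of (r *\<^sub>R a) = r *\<^sub>R sq_of a" by (metis mat_of_scaleR sq_of_inverse mat_of_inverse UNIV_I)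
lemma mat_of_sq_of[simp]: "mat_of (sq_of M) = M" by (simp add: sq_of_inverse)

lemma bounded_linear_mat_of: "bounded_linear mat_of"
  apply (rule bounded_linear_intro[where K="real CARD('n) * real CARD('n)"])
  using mat_frob_le_onorm by (auto simp: mat_of_add mat_of_scaleR norm_sq_def' mult.commute)

lemma bounded_linear_sq_of: "bounded_linear (sq_of :: real^'n^'n \<Rightarrow> 'n sq)"
  apply (rule bounded_linear_intro[where K="real CARD('n) * real CARD('n)"])
  using onorm_le_mat_frob by (auto simp: sq_of_add sq_of_scaleR norm_sq_def' mult.commute)

instance sq :: (finite) banach
proof
  fix X :: "nat \<Rightarrow> 'a sq"
  assume "Cauchy X"
  then have "Cauchy (\<lambda>n. mat_of (X n))" by (rule bounded_linear.Cauchy[OF bounded_linear_mat_of])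
  then obtain L where "(\<lambda>n. mat_of (X n)) \<longlonglongrightarrow> L" using Cauchy_convergent_iff convergent_def by blast
  then have "(\<lambda>n. sq_of (mat_of (X n))) \<longlonglongrightarrow> sq_of L" by (rule bounded_linear.tendsto[OF bounded_linear_sq_of])
  then show "convergent X" by (auto simp: mat_of_inverse convergent_def)
qed

lemma mat_of_pow: "mat_of (X ^ k) = matpow (mat_of X) k"
  by (induction k) (simp_all add: mat_of_one mat_of_mult)

lemma mat_exp_eq: "mat_exp M = mat_of (exp (sq_of M))"
proof -
  have s: "summable (\<lambda>n. sq_of M ^ n /\<^sub>R fact n)" by (rule summable_exp_generic)
  have "mat_of (exp (sq_of M)) = mat_of (\<Sum>n. sq_of M ^ n /\<^sub>R fact n)" by (simp add: exp_def)
  also have "\<dots> = (\<Sum>n. mat_of (sq_of M ^ n /\<^sub>R fact n))"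
    by (rule bounded_linear.suminf[OF bounded_linear_mat_of s])
  also have "\<dots> = (\<Sum>k. (1 / fact k) *\<^sub>R matpow M k)"
    by (simp add: mat_of_scaleR mat_of_pow divide_inverse_commute)
  finally show ?thesis by (simp add: mat_exp_def)
qed


lemma mv_sum: "(M::real^'n^'k) *v sum f S = (\<Sum>x\<in>S. M *v f x)"
  by (induction S rule: infinite_finite_induct) (simp_all add: matrix_vector_right_distrib)

definition app :: "'n sq \<Rightarrow> real^'n \<Rightarrow> real^'n" where "app X v = mat_of X *v v"

lemma bounded_bilinear_app: "bounded_bilinear (app :: 'n::finite sq \<Rightarrow> _)"
proof
  fix a a' :: "'n sq" and b b' :: "real^'n" and r :: real
  show "app (a + a') b = app a b + app a' b" by (simp add: app_def mat_of_add matrix_vector_mult_add_rdistrib)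
  show "app a (b + b') = app a b + app a b'" by (simp add: app_def matrix_vector_right_distrib)
  show "app (r *\<^sub>R a) b = r *\<^sub>R app a b" by (simp add: app_def mat_of_scaleR scaleR_matrix_vector_assoc)
  show "app a (r *\<^sub>R b) = r *\<^sub>R app a b" by (simp add: app_def matrix_vector_mult_scaleR)
  show "\<exists>K. \<forall>a b. norm (app a b) \<le> norm a * norm b * K"
    by (rule exI[of _ 1]) (simp add: app_def norm_sq_def' onorm[OF matrix_vector_mul_bounded_linear])
qed

lemma app_mult: "app (X * Y) v = app X (app Y v)" by (simp add: app_def mat_of_mult matrix_vector_mul_assoc)
lemma app_one[simp]: "app 1 v = v" by (simp add: app_def mat_of_one)
lemma app_sq_of[simp]: "app (sq_of M) v = M *v v" by (simp add: app_def)

definition EE :: "real^'n^'n \<Rightarrow> real \<Rightarrow> 'n sq" where "EE A s = exp (s *\<^sub>R sq_of A)"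

lemma mat_exp_EE: "mat_exp (s *\<^sub>R A) = mat_of (EE A s)"
  by (simp add: mat_exp_eq EE_def sq_of_scaleR)

lemma EE_0[simp]: "EE A 0 = 1" by (simp add: EE_def)

lemma EE_add: "EE A (s + r) = EE A s * EE A r"
  unfolding EE_def scaleR_add_left by (rule exp_add_commuting) (simp add: algebra_simps)

lemma EE_commute: "EE A s * sq_of A = sq_of A * EE A s"
  unfolding EE_def by (rule exp_times_scaleR_commute)

lemma EE_inv: "EE A s * EE A (- s) = 1"
  by (metis EE_0 EE_add add.right_inverse)

lemma EE_inv': "EE A (- s) * EE A s = 1"
  by (metis EE_0 EE_add add.left_inverse)

lemma EE_deriv: "((EE A) has_vector_derivative sq_of A * EE A s) (at s within T)"
  unfolding EE_def using exp_scaleR_has_vector_derivative_left has_vector_derivative_at_within by blast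

lemma EE_deriv_rev: "((\<lambda>s. EE A (c - s)) has_vector_derivative - (sq_of A * EE A (c - s))) (at s within T)"
proof -
  have 1: "((\<lambda>s. c - s) has_vector_derivative -1) (at s)"
    by (auto intro!: derivative_eq_intros)
  have "(((EE A) o (\<lambda>s. c - s)) has_vector_derivative (-1) *\<^sub>R (sq_of A * EE A (c - s))) (at s)"
    by (rule vector_diff_chain_at[OF 1 EE_deriv])
  then show ?thesis by (simp add: o_def has_vector_derivative_at_within)
qed

lemma app_E_invariant:
  assumes K: "subspace K" and inv: "\<And>k. k \<in> K \<Longrightarrow> A *v k \<in> K" and k: "k \<in> K"
  shows "app (EE A s) k \<in> K"
proof -
  let ?X = "s *\<^sub>R sq_of A"
  have sm: "summable (\<lambda>n. ?X ^ n /\<^sub>R fact n)" by (rule summable_exp_generic)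
  interpret bl: bounded_linear "\<lambda>X. app X k" by (rule bounded_bilinear.bounded_linear_left[OF bounded_bilinear_app])
  have pw: "app (?X ^ n) k \<in> K" for n
  proof (induction n)
    case 0 then show ?case using k by simp
  next
    case (Suc n)
    have "app (?X ^ Suc n) k = s *\<^sub>R (A *v app (?X ^ n) k)"
      by (simp only: power_Suc app_mult) (simp add: app_def mat_of_scaleR scaleR_matrix_vector_assoc)
    then show ?case using Suc inv K by (simp add: subspace_scale)
  qed
  have trm: "app (?X ^ n /\<^sub>R fact n) k \<in> K" for n
  proof -
    have "app (?X ^ n /\<^sub>R fact n) k = (inverse (fact n)) *\<^sub>R app (?X ^ n) k"
      by (rule bounded_bilinear.scaleR_left[OF bounded_bilinear_app])
    then show ?thesis using pw K by (simp add: subspace_scale)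
  qed
  have "(\<lambda>n. app (?X ^ n /\<^sub>R fact n) k) sums app (\<Sum>n. ?X ^ n /\<^sub>R fact n) k"
    using bl.sums[OF summable_sums[OF sm]] .
  then have lim: "(\<lambda>N. \<Sum>n<N. app (?X ^ n /\<^sub>R fact n) k) \<longlonglongrightarrow> app (exp ?X) k"
    by (simp add: sums_def exp_def)
  have "\<And>N. (\<Sum>n<N. app (?X ^ n /\<^sub>R fact n) k) \<in> K"
    using trm K by (simp add: subspace_sum)
  from closed_sequentially[OF closed_subspace[OF K] this lim] show ?thesis by (simp add: EE_def)
qed

definition kry :: "real^'n^'n \<Rightarrow> real^'m^'n \<Rightarrow> nat \<Rightarrow> (real^'n) set" where
  "kry A B j = {\<Sum>l<j. (matpow A l ** B) *v y l | y. True}"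

lemma kry_subspace: "subspace (kry A B j)"
  unfolding subspace_def kry_def
proof (intro conjI ballI allI)
  show "0 \<in> {\<Sum>l<j. (matpow A l ** B) *v y l | y. True}"
    by (rule CollectI, rule exI[of _ "\<lambda>_. 0"]) simp
next
  fix x z assume "x \<in> {\<Sum>l<j. (matpow A l ** B) *v y l | y. True}" "z \<in> {\<Sum>l<j. (matpow A l ** B) *v y l | y. True}"
  then obtain y1 y2 where "x = (\<Sum>l<j. (matpow A l ** B) *v y1 l)" "z = (\<Sum>l<j. (matpow A l ** B) *v y2 l)" by blast
  then have "x + z = (\<Sum>l<j. (matpow A l ** B) *v (y1 l + y2 l))"
    by (simp add: sum.distrib matrix_vector_right_distrib)
  then show "x + z \<in> {\<Sum>l<j. (matpow A l ** B) *v y l | y. True}"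
    unfolding mem_Collect_eq by (intro exI[of _ "\<lambda>l. y1 l + y2 l"]) simp
next
  fix c :: real and x assume "x \<in> {\<Sum>l<j. (matpow A l ** B) *v y l | y. True}"
  then obtain y1 where "x = (\<Sum>l<j. (matpow A l ** B) *v y1 l)" by blast
  then have "c *\<^sub>R x = (\<Sum>l<j. (matpow A l ** B) *v (c *\<^sub>R y1 l))"
    by (simp add: scaleR_sum_right matrix_vector_mult_scaleR)
  then show "c *\<^sub>R x \<in> {\<Sum>l<j. (matpow A l ** B) *v y l | y. True}"
    unfolding mem_Collect_eq by (intro exI[of _ "\<lambda>l. c *\<^sub>R y1 l"]) simp
qed

lemma kry_Suc_mono: "kry A B j \<subseteq> kry A B (Suc j)"
proof
  fix x assume "x \<in> kry A B j"
  then obtain y where x: "x = (\<Sum>l<j. (matpow A l ** B) *v y l)" by (auto simp: kry_def)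
  have "(\<Sum>l<Suc j. (matpow A l ** B) *v (y(j := 0)) l) = (\<Sum>l<j. (matpow A l ** B) *v (y(j := 0)) l)"
    by (simp add: lessThan_Suc)
  also have "\<dots> = x" unfolding x by (intro sum.cong) auto
  finally show "x \<in> kry A B (Suc j)" unfolding kry_def mem_Collect_eq by (intro exI[of _ "y(j := 0)"]) simp
qed

lemma kry_mono: "i \<le> j \<Longrightarrow> kry A B i \<subseteq> kry A B j"
  by (rule lift_Suc_mono_le[of "kry A B"]) (use kry_Suc_mono in blast)

lemma kry_Suc_iff: "x \<in> kry A B (Suc j) \<longleftrightarrow> (\<exists>y0 k. k \<in> kry A B j \<and> x = B *v y0 + A *v k)"
proof
  assume "x \<in> kry A B (Suc j)"
  then obtain y where x: "x = (\<Sum>l<Suc j. (matpow A l ** B) *v y l)" by (auto simp: kry_def)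
  have "x = B *v y 0 + (\<Sum>l<j. (matpow A (Suc l) ** B) *v y (Suc l))"
    unfolding x sum.lessThan_Suc_shift by simp
  also have "(\<Sum>l<j. (matpow A (Suc l) ** B) *v y (Suc l)) = A *v (\<Sum>l<j. (matpow A l ** B) *v y (Suc l))"
    by (simp add: mv_sum matrix_vector_mul_assoc matrix_mul_assoc)
  finally show "\<exists>y0 k. k \<in> kry A B j \<and> x = B *v y0 + A *v k"
    unfolding kry_def mem_Collect_eq
    by (intro exI[of _ "y 0"] exI[of _ "\<Sum>l<j. (matpow A l ** B) *v y (Suc l)"] conjI) auto
next
  assume "\<exists>y0 k. k \<in> kry A B j \<and> x = B *v y0 + A *v k"
  then obtain y0 y where x: "x = B *v y0 + A *v (\<Sum>l<j. (matpow A l ** B) *v y l)" by (auto simp: kry_def)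
  let ?y = "\<lambda>l. if l = 0 then y0 else y (l - 1)"
  have "(\<Sum>l<Suc j. (matpow A l ** B) *v ?y l) = B *v y0 + (\<Sum>l<j. (matpow A (Suc l) ** B) *v y l)"
    unfolding sum.lessThan_Suc_shift by simp
  also have "\<dots> = x" unfolding x
    by (simp add: mv_sum matrix_vector_mul_assoc matrix_mul_assoc)
  finally have "(\<Sum>l<Suc j. (matpow A l ** B) *v ?y l) = x" .
  then show "x \<in> kry A B (Suc j)" unfolding kry_def mem_Collect_eq
    by (intro exI[of _ ?y]) simp
qed

lemma kry_stable_step:
  assumes "kry A B (Suc j) \<subseteq> kry A B j"
  shows "kry A B (Suc (Suc j)) \<subseteq> kry A B (Suc j)"
proof
  fix x assume "x \<in> kry A B (Suc (Suc j))"
  then obtain y0 k where "k \<in> kry A B (Suc j)" "x = B *v y0 + A *v k" using kry_Suc_iff by blast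
  moreover then have "k \<in> kry A B j" using assms by blast
  ultimately show "x \<in> kry A B (Suc j)" using kry_Suc_iff by blast
qed

lemma kry_stable:
  assumes "kry A B (Suc j) \<subseteq> kry A B j"
  shows "kry A B (j + d) \<subseteq> kry A B j"
proof -
  have st: "kry A B (Suc (j + d)) \<subseteq> kry A B (j + d)" for d
  proof (induction d)
    case 0 then show ?case using assms by simp
  next
    case (Suc d) then show ?case using kry_stable_step[of A B "j + d"] by simp
  qed
  show ?thesis
  proof (induction d)
    case 0 then show ?case by simp
  next
    case (Suc d) then show ?case using st[of d] by simp
  qed
qed

lemma kry_exists_stable: "\<exists>j\<le>CARD('n). kry (A::real^'n^'n) B (Suc j) \<subseteq> kry A B j"
proof (rule ccontr)
  assume "\<not> ?thesis"
  then have ns: "\<And>j. j \<le> CARD('n) \<Longrightarrow> \<not> kry A B (Suc j) \<subseteq> kry A B j" by blast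
  have "j \<le> Suc CARD('n) \<Longrightarrow> j \<le> dim (kry A B j)" for j
  proof (induction j)
    case 0 then show ?case by simp
  next
    case (Suc j)
    have "span (kry A B j) \<subset> span (kry A B (Suc j))"
      using ns[of j] Suc.prems kry_Suc_mono[of A B j] by (auto simp: span_eq_iff[THEN iffD2, OF kry_subspace])
    then have "dim (kry A B j) < dim (kry A B (Suc j))" by (rule dim_psubset)
    with Suc show ?case by simp
  qed
  then have "Suc CARD('n) \<le> dim (kry A B (Suc CARD('n)))" by simp
  with dim_subset_UNIV_cart[of "kry A B (Suc CARD('n))"] show False by simp
qed

definition Kry :: "real^'n^'n \<Rightarrow> real^'m^'n \<Rightarrow> (real^'n) set" where
  "Kry A B = kry A B CARD('n)"

lemma Kry_subspace: "subspace (Kry A B)" by (simp add: Kry_def kry_subspace)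

lemma kry_single: "(matpow A l ** B) *v y \<in> kry A B (Suc l)"
proof -
  have "(\<Sum>i<Suc l. (matpow A i ** B) *v (if i = l then y else 0)) = (matpow A l ** B) *v y"
    by (simp add: lessThan_Suc)
  then show ?thesis unfolding kry_def mem_Collect_eq
    by (intro exI[of _ "\<lambda>i. if i = l then y else 0"]) (simp add: lessThan_Suc)
qed

lemma Kry_term: "(matpow (A::real^'n^'n) l ** B) *v y \<in> Kry A B"
proof -
  obtain j where j: "j \<le> CARD('n)" "kry A B (Suc j) \<subseteq> kry A B j" using kry_exists_stable by blast
  have "kry A B (Suc l) \<subseteq> kry A B CARD('n)"
  proof (cases "Suc l \<le> CARD('n)")
    case True then show ?thesis by (rule kry_mono)
  next
    case False
    then have "Suc l = j + (Suc l - j)" using j by simp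
    then have "kry A B (Suc l) \<subseteq> kry A B j" using kry_stable[OF j(2), of "Suc l - j"] by simp
    also have "\<dots> \<subseteq> kry A B CARD('n)" by (rule kry_mono[OF j(1)])
    finally show ?thesis .
  qed
  then show ?thesis using kry_single unfolding Kry_def by blast
qed

lemma Kry_B: "B *v y \<in> Kry A B"
  using Kry_term[of A 0 B y] by simp

lemma Kry_inv: "k \<in> Kry (A::real^'n^'n) B \<Longrightarrow> A *v k \<in> Kry A B"
proof -
  assume "k \<in> Kry A B"
  then obtain y where k: "k = (\<Sum>l<CARD('n). (matpow A l ** B) *v y l)" by (auto simp: Kry_def kry_def)
  have "A *v k = (\<Sum>l<CARD('n). (matpow A (Suc l) ** B) *v y l)"
    unfolding k by (simp add: mv_sum matrix_vector_mul_assoc matrix_mul_assoc)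
  also have "\<dots> \<in> Kry A B" by (rule subspace_sum[OF Kry_subspace]) (rule Kry_term)
  finally show ?thesis .
qed

lemma Kry_E: "k \<in> Kry A B \<Longrightarrow> app (EE A s) k \<in> Kry A B"
  by (rule app_E_invariant[OF Kry_subspace Kry_inv])

lemma perp_in:
  fixes K :: "(real^'n) set"
  assumes K: "subspace K" and h: "\<And>\<eta>. (\<And>k. k \<in> K \<Longrightarrow> \<eta> \<bullet> k = 0) \<Longrightarrow> \<eta> \<bullet> d = 0"
  shows "d \<in> K"
proof -
  obtain y z where y: "y \<in> span K" and z: "\<And>w. w \<in> span K \<Longrightarrow> orthogonal z w" and d: "d = y + z"
    by (rule orthogonal_subspace_decomp_exists[of K d]) blast
  have sK: "span K = K" using K by (simp add: span_eq_iff)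
  have "z \<bullet> d = 0" using z sK by (intro h) (auto simp: orthogonal_def)
  moreover have "z \<bullet> y = 0" using z y by (simp add: orthogonal_def)
  ultimately have "z \<bullet> z = 0" by (simp add: d inner_add_right)
  then have "z = 0" by simp
  then show ?thesis using y d sK by simp
qed

lemma EE_cont: "continuous_on T (EE A)"
  by (rule continuous_at_imp_continuous_on) (meson EE_deriv has_vector_derivative_continuous)

lemma sol_step_in_Kry:
  fixes A :: "real^'n^'n" and B :: "real^'m^'n"
  assumes ab: "a \<le> b"
    and sol: "\<forall>s\<in>{a..b}. ((\<lambda>\<tau>. A *v x \<tau> + B *v u \<tau>) has_integral (x s - x a)) {a..s}"
    and S: "finite S" and uc: "\<And>\<tau>. \<tau> \<in> {a<..<b} - S \<Longrightarrow> isCont u \<tau>"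
  shows "x b - app (EE A (b - a)) (x a) \<in> Kry A B"
proof -
  define f where "f = (\<lambda>\<tau>. A *v x \<tau> + B *v u \<tau>)"
  have fint: "f integrable_on {a..b}" using sol ab unfolding f_def by auto
  have xeq: "x s = x a + integral {a..s} f" if "s \<in> {a..b}" for s
  proof -
    have "(f has_integral (x s - x a)) {a..s}" using sol that unfolding f_def by auto
    then have "integral {a..s} f = x s - x a" by (rule integral_unique)
    then show ?thesis by simp
  qed
  have xcont: "continuous_on {a..b} x"
  proof -
    have "continuous_on {a..b} (\<lambda>s. x a + integral {a..s} f)"
      by (intro continuous_intros indefinite_integral_continuous_1 fint)
    then show ?thesis using xeq by (metis (no_types, lifting) continuous_on_cong)
  qed
  have xder: "(x has_vector_derivative f \<tau>) (at \<tau>)" if \<tau>: "\<tau> \<in> {a<..<b} - S" for \<tau>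
  proof -
    have tin: "\<tau> \<in> interior {a..b}" using \<tau> by simp
    have "isCont x \<tau>" using continuous_on_interior[OF xcont tin] .
    moreover have "isCont u \<tau>" using uc \<tau> by simp
    ultimately have "isCont f \<tau>" unfolding f_def
      by (intro continuous_intros) (auto intro: continuous_at_compose[OF _ matrix_vector_mult_linear_continuous_at, unfolded o_def])
    then have "continuous (at \<tau> within ({a..b} - {})) f" by (simp add: continuous_at_imp_continuous_within)
    from integral_has_vector_derivative_continuous_at[OF fint _ _ this] \<tau>
    have "((\<lambda>s. integral {a..s} f) has_vector_derivative f \<tau>) (at \<tau> within {a..b})" by simp
    then have "((\<lambda>s. integral {a..s} f) has_vector_derivative f \<tau>) (at \<tau>)"
      using at_within_interior[OF tin] by simp
    from has_vector_derivative_add[OF has_vector_derivative_const this]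
    have d: "((\<lambda>s. x a + integral {a..s} f) has_vector_derivative f \<tau>) (at \<tau>)" by simp
    show ?thesis
    proof (rule has_vector_derivative_transform_within_open[OF d open_greaterThanLessThan])
      show "\<tau> \<in> {a<..<b}" using \<tau> by simp
      fix y assume "y \<in> {a<..<b}"
      then have yy: "y \<in> {a..b}" by simp
      show "x a + integral {a..y} f = x y" by (simp only: xeq[OF yy])
    qed
  qed
  show ?thesis
  proof (rule perp_in[OF Kry_subspace])
    fix \<eta> :: "real^'n" assume perp: "\<And>k. k \<in> Kry A B \<Longrightarrow> \<eta> \<bullet> k = 0"
    define h where "h = (\<lambda>s. \<eta> \<bullet> app (EE A (b - s)) (x s))"
    have hcont: "continuous_on {a..b} h"
    proof -
      have "continuous_on {a..b} (\<lambda>s. EE A (b - s))"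
        by (rule continuous_on_compose2[OF EE_cont[of UNIV A]]) (auto intro!: continuous_intros)
      then show ?thesis unfolding h_def
        by (intro continuous_intros bounded_bilinear.continuous_on[OF bounded_bilinear_app] xcont)
    qed
    have hder: "(h has_vector_derivative 0) (at \<tau>)" if \<tau>: "\<tau> \<in> {a<..<b} - S" for \<tau>
    proof -
      have d1: "((\<lambda>s. app (EE A (b - s)) (x s)) has_vector_derivative
          (app (EE A (b - \<tau>)) (f \<tau>) + app (- (sq_of A * EE A (b - \<tau>))) (x \<tau>))) (at \<tau>)"
        by (rule bounded_bilinear.has_vector_derivative[OF bounded_bilinear_app EE_deriv_rev xder[OF \<tau>]])
      have "app (EE A (b - \<tau>)) (f \<tau>) + app (- (sq_of A * EE A (b - \<tau>))) (x \<tau>)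
          = app (EE A (b - \<tau>)) (B *v u \<tau>)"
      proof -
        have "app (- (sq_of A * EE A (b - \<tau>))) (x \<tau>) = - app (EE A (b - \<tau>)) (A *v x \<tau>)"
          by (simp add: bounded_bilinear.minus_left[OF bounded_bilinear_app] EE_commute[symmetric] app_mult)
        then show ?thesis unfolding f_def
          by (simp add: bounded_bilinear.add_right[OF bounded_bilinear_app])
      qed
      also have "\<eta> \<bullet> \<dots> = 0" by (rule perp) (intro Kry_E Kry_B)
      finally have "\<eta> \<bullet> (app (EE A (b - \<tau>)) (f \<tau>) + app (- (sq_of A * EE A (b - \<tau>))) (x \<tau>)) = 0" .
      with bounded_linear.has_vector_derivative[OF bounded_linear_inner_right[of \<eta>] d1]
      show ?thesis unfolding h_def by simp
    qed
    have "((\<lambda>_. 0) has_integral (h b - h a)) {a..b}"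
      by (rule fundamental_theorem_of_calculus_interior_strong[OF S ab hder hcont])
    from has_integral_unique[OF this has_integral_0] have "h b = h a" by simp
    then show "\<eta> \<bullet> (x b - app (EE A (b - a)) (x a)) = 0"
      unfolding h_def by (simp add: inner_diff_right)
  qed
qed

lemma EE_deriv_shift: "((\<lambda>s. EE A (s - c)) has_vector_derivative sq_of A * EE A (s - c)) (at s within T)"
proof -
  have 1: "((\<lambda>s. s - c) has_vector_derivative 1) (at s within T)"
    by (auto intro!: derivative_eq_intros)
  have "(((EE A) o (\<lambda>s. s - c)) has_vector_derivative 1 *\<^sub>R (sq_of A * EE A (s - c))) (at s within T)"
    by (rule vector_diff_chain_within[OF 1 EE_deriv])
  then show ?thesis by (simp add: o_def)
qed

lemma EE_cont_comp: "continuous_on S g \<Longrightarrow> continuous_on S (\<lambda>s. EE A (g s))"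
  by (rule continuous_on_compose2[OF EE_cont[of UNIV A]]) auto

lemma mv_cont: "continuous_on S u \<Longrightarrow> continuous_on S (\<lambda>\<tau>. (M::real^'m^'n) *v u \<tau>)"
  by (rule continuous_on_compose2[OF matrix_vector_mult_linear_continuous_on[of UNIV M]]) auto

lemma g_cont:
  fixes A :: "real^'n^'n" and B :: "real^'m^'n"
  assumes "continuous_on UNIV u"
  shows "continuous_on S (\<lambda>\<tau>. app (EE A (- \<tau>)) (B *v u \<tau>))"
proof -
  have "continuous_on S (\<lambda>\<tau>. EE A (- \<tau>))" by (intro EE_cont_comp continuous_intros)
  moreover have "continuous_on S (\<lambda>\<tau>. B *v u \<tau>)" by (intro mv_cont continuous_on_subset[OF assms]) auto
  ultimately show ?thesis by (rule bounded_bilinear.continuous_on[OF bounded_bilinear_app])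
qed

lemma sol_exists:
  fixes A :: "real^'n^'n" and B :: "real^'m^'n"
  assumes ab: "a \<le> b" and uc: "continuous_on UNIV u"
  shows "\<exists>x. (\<forall>s\<in>{a..b}. ((\<lambda>\<tau>. A *v x \<tau> + B *v u \<tau>) has_integral (x s - x a)) {a..s}) \<and> x a = x0 \<and>
     x b = app (EE A (b - a)) x0 + app (EE A b) (integral {a..b} (\<lambda>\<tau>. app (EE A (- \<tau>)) (B *v u \<tau>)))"
proof -
  define g where "g = (\<lambda>\<tau>. app (EE A (- \<tau>)) (B *v u \<tau>))"
  have gc: "continuous_on S g" for S unfolding g_def by (rule g_cont[OF uc])
  define G where "G = (\<lambda>s. integral {a..s} g)"
  define x where "x = (\<lambda>s. app (EE A (s - a)) x0 + app (EE A s) (G s))"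
  have xder: "(x has_vector_derivative (A *v x s + B *v u s)) (at s within {a..b})" if s: "s \<in> {a..b}" for s
  proof -
    have Gd: "(G has_vector_derivative g s) (at s within {a..b})"
      unfolding G_def by (rule integral_has_vector_derivative[OF gc s])
    have d1: "((\<lambda>s. app (EE A (s - a)) x0) has_vector_derivative app (sq_of A * EE A (s - a)) x0) (at s within {a..b})"
      by (rule bounded_linear.has_vector_derivative[OF bounded_bilinear.bounded_linear_left[OF bounded_bilinear_app] EE_deriv_shift])
    have d2: "((\<lambda>s. app (EE A s) (G s)) has_vector_derivative (app (EE A s) (g s) + app (sq_of A * EE A s) (G s))) (at s within {a..b})"
      by (rule bounded_bilinear.has_vector_derivative[OF bounded_bilinear_app EE_deriv Gd])
    have D: "(x has_vector_derivative (app (sq_of A * EE A (s - a)) x0 + (app (EE A s) (g s) + app (sq_of A * EE A s) (G s)))) (at s within {a..b})"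
      unfolding x_def by (rule has_vector_derivative_add[OF d1 d2])
    have eq: "app (sq_of A * EE A (s - a)) x0 + (app (EE A s) (g s) + app (sq_of A * EE A s) (G s)) = A *v x s + B *v u s"
    proof -
      have "app (EE A s) (g s) = B *v u s" unfolding g_def by (simp add: app_mult[symmetric] EE_inv)
      then show ?thesis unfolding x_def by (simp add: app_mult matrix_vector_right_distrib)
    qed
    from D[unfolded eq] show ?thesis .
  qed
  have sol: "((\<lambda>\<tau>. A *v x \<tau> + B *v u \<tau>) has_integral (x s - x a)) {a..s}" if s: "s \<in> {a..b}" for s
  proof (rule fundamental_theorem_of_calculus)
    show "a \<le> s" using s by simp
    fix \<tau> assume "\<tau> \<in> {a..s}"
    then have "\<tau> \<in> {a..b}" using s by auto
    from has_vector_derivative_within_subset[OF xder[OF this], of "{a..s}"] s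
    show "(x has_vector_derivative A *v x \<tau> + B *v u \<tau>) (at \<tau> within {a..s})" by auto
  qed
  have xa: "x a = x0"
  proof -
    have "G a = 0" unfolding G_def by simp
    then show ?thesis unfolding x_def by (simp add: bounded_bilinear.zero_right[OF bounded_bilinear_app])
  qed
  have xb: "x b = app (EE A (b - a)) x0 + app (EE A b) (integral {a..b} (\<lambda>\<tau>. app (EE A (- \<tau>)) (B *v u \<tau>)))"
    unfolding x_def G_def g_def by simp
  show ?thesis using sol xa xb by blast
qed

lemma qv_lemma:
  fixes B :: "real^'m^'n"
  shows "\<eta> \<bullet> app X (B *v v) = (\<chi> j. \<eta> \<bullet> app X (column j B)) \<bullet> v"
proof -
  have "B *v v = (\<Sum>j\<in>UNIV. v $ j *\<^sub>R column j B)"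
    by (simp add: matrix_mult_sum scalar_mult_eq_scaleR)
  then have "\<eta> \<bullet> app X (B *v v) = (\<Sum>j\<in>UNIV. v $ j * (\<eta> \<bullet> app X (column j B)))"
    by (simp add: bounded_bilinear.sum_right[OF bounded_bilinear_app]
        bounded_bilinear.scaleR_right[OF bounded_bilinear_app] inner_sum_right)
  also have "\<dots> = (\<chi> j. \<eta> \<bullet> app X (column j B)) \<bullet> v"
    by (simp add: inner_vec_def mult.commute)
  finally show ?thesis .
qed

lemma reach:
  fixes A :: "real^'n^'n" and B :: "real^'m^'n"
  assumes ab: "a < b" and w: "w \<in> Kry A B"
  shows "\<exists>u. continuous_on UNIV u \<and> (\<forall>\<tau>. \<tau> \<notin> {a<..<b} \<longrightarrow> u \<tau> = 0) \<and>
     app (EE A b) (integral {a..b} (\<lambda>\<tau>. app (EE A (- \<tau>)) (B *v u \<tau>))) = w"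
proof -
  define U where "U = {u :: real \<Rightarrow> real^'m. continuous_on UNIV u \<and> (\<forall>\<tau>. \<tau> \<notin> {a<..<b} \<longrightarrow> u \<tau> = 0)}"
  define I where "I = (\<lambda>u. integral {a..b} (\<lambda>\<tau>. app (EE A (- \<tau>)) (B *v u \<tau>)))"
  have int: "(\<lambda>\<tau>. app (EE A (- \<tau>)) (B *v u \<tau>)) integrable_on {a..b}" if "u \<in> U" for u
    using that unfolding U_def by (intro integrable_continuous_interval g_cont) auto
  have sub: "subspace (I ` U)"
    unfolding subspace_def
  proof (intro conjI ballI allI)
    have "(\<lambda>_. 0) \<in> U" unfolding U_def by simp
    moreover have "I (\<lambda>_. 0) = 0" unfolding I_def by (simp add: bounded_bilinear.zero_right[OF bounded_bilinear_app])
    ultimately show "0 \<in> I ` U" by force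
  next
    fix x y assume "x \<in> I ` U" "y \<in> I ` U"
    then obtain u1 u2 where u: "u1 \<in> U" "u2 \<in> U" "x = I u1" "y = I u2" by blast
    have "(\<lambda>\<tau>. u1 \<tau> + u2 \<tau>) \<in> U" using u(1,2) unfolding U_def by (auto intro: continuous_intros)
    moreover have "I (\<lambda>\<tau>. u1 \<tau> + u2 \<tau>) = x + y"
      unfolding u I_def
      by (simp add: matrix_vector_right_distrib bounded_bilinear.add_right[OF bounded_bilinear_app] integral_add[OF int int] u)
    ultimately show "x + y \<in> I ` U" by force
  next
    fix c :: real and x assume "x \<in> I ` U"
    then obtain u1 where u: "u1 \<in> U" "x = I u1" by blast
    have "(\<lambda>\<tau>. c *\<^sub>R u1 \<tau>) \<in> U" using u(1) unfolding U_def by (auto intro: continuous_intros)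
    moreover have "I (\<lambda>\<tau>. c *\<^sub>R u1 \<tau>) = c *\<^sub>R x"
      unfolding u I_def
      by (simp add: matrix_vector_mult_scaleR bounded_bilinear.scaleR_right[OF bounded_bilinear_app])
    ultimately show "c *\<^sub>R x \<in> I ` U" by force
  qed
  have KR: "Kry A B \<subseteq> I ` U"
  proof
    fix k assume k: "k \<in> Kry A B"
    show "k \<in> I ` U"
    proof (rule perp_in[OF sub])
      fix \<eta> :: "real^'n" assume perp: "\<And>r. r \<in> I ` U \<Longrightarrow> \<eta> \<bullet> r = 0"
      define q where "q = (\<lambda>\<tau>. \<chi> j. \<eta> \<bullet> app (EE A (- \<tau>)) (column j B))"
      have qc: "continuous_on UNIV q" unfolding q_def
      proof (intro continuous_on_vec_lambda continuous_intros)
        fix j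
        have "continuous_on UNIV (\<lambda>\<tau>. EE A (- \<tau>))" by (intro EE_cont_comp continuous_intros)
        then show "continuous_on UNIV (\<lambda>\<tau>. app (EE A (- \<tau>)) (column j B))"
          by (intro bounded_bilinear.continuous_on[OF bounded_bilinear_app] continuous_intros)
      qed
      have qv: "\<eta> \<bullet> app (EE A (- \<tau>)) (B *v v) = q \<tau> \<bullet> v" for \<tau> v
        unfolding q_def by (rule qv_lemma)
      define \<phi> where "\<phi> = (\<lambda>\<tau>::real. max 0 ((\<tau> - a) * (b - \<tau>)))"
      have \<phi>c: "continuous_on UNIV \<phi>" unfolding \<phi>_def by (intro continuous_intros)
      define u where "u = (\<lambda>\<tau>. \<phi> \<tau> *\<^sub>R q \<tau>)"
      have uU: "u \<in> U"
      proof -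
        have "continuous_on UNIV u" unfolding u_def by (intro continuous_intros \<phi>c qc)
        moreover have "u \<tau> = 0" if "\<tau> \<notin> {a<..<b}" for \<tau>
        proof -
          have "(\<tau> - a) * (b - \<tau>) \<le> 0" using that ab by (auto simp: mult_le_0_iff)
          then show ?thesis by (simp add: u_def \<phi>_def)
        qed
        ultimately show ?thesis unfolding U_def by blast
      qed
      have "\<eta> \<bullet> I u = 0" using perp uU by blast
      moreover have "\<eta> \<bullet> I u = integral {a..b} (\<lambda>\<tau>. \<phi> \<tau> * (q \<tau> \<bullet> q \<tau>))"
      proof -
        have "\<eta> \<bullet> I u = integral {a..b} ((\<lambda>z. \<eta> \<bullet> z) o (\<lambda>\<tau>. app (EE A (- \<tau>)) (B *v u \<tau>)))"
          unfolding I_def by (rule integral_linear[OF int[OF uU] bounded_linear_inner_right, symmetric])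
        also have "\<dots> = integral {a..b} (\<lambda>\<tau>. \<phi> \<tau> * (q \<tau> \<bullet> q \<tau>))"
          by (rule integral_cong) (simp add: qv u_def)
        finally show ?thesis .
      qed
      ultimately have z: "integral {a..b} (\<lambda>\<tau>. \<phi> \<tau> * (q \<tau> \<bullet> q \<tau>)) = 0" by simp
      have nn: "\<And>\<tau>. \<tau> \<in> {a..b} \<Longrightarrow> 0 \<le> \<phi> \<tau> * (q \<tau> \<bullet> q \<tau>)"
        unfolding \<phi>_def by simp
      have cc: "continuous_on {a..b} (\<lambda>\<tau>. \<phi> \<tau> * (q \<tau> \<bullet> q \<tau>))"
        by (intro continuous_intros continuous_on_subset[OF \<phi>c] continuous_on_subset[OF qc]) auto
      have all0: "\<forall>\<tau>\<in>{a..b}. \<phi> \<tau> * (q \<tau> \<bullet> q \<tau>) = 0"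
        using integral_eq_0_iff[OF cc ab nn] z by simp
      have F0: "\<eta> \<bullet> app (EE A (- \<tau>)) (B *v v) = 0" if \<tau>: "\<tau> \<in> {a<..<b}" for \<tau> v
      proof -
        have "\<phi> \<tau> > 0" using \<tau> unfolding \<phi>_def by (simp add: max_def)
        moreover have "\<phi> \<tau> * (q \<tau> \<bullet> q \<tau>) = 0" using all0 \<tau> by simp
        ultimately have "q \<tau> = 0" by simp
        then show ?thesis using qv by simp
      qed
      have Fl: "\<forall>\<tau>\<in>{a<..<b}. \<forall>v. \<eta> \<bullet> app (EE A (- \<tau>)) ((matpow A l ** B) *v v) = 0" for l
      proof (induction l)
        case 0 then show ?case using F0 by simp
      next
        case (Suc l)
        show ?case
        proof (intro ballI allI)
          fix \<tau> v assume \<tau>: "\<tau> \<in> {a<..<b}"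
          define wv where "wv = (matpow A l ** B) *v v"
          have e1: "((\<lambda>s. EE A (- s)) has_vector_derivative - (sq_of A * EE A (- \<tau>))) (at \<tau>)"
            using EE_deriv_rev[of A 0 \<tau> UNIV] by simp
          have bl: "bounded_linear (\<lambda>X. \<eta> \<bullet> app X wv)"
            by (rule bounded_linear_compose[OF bounded_linear_inner_right bounded_bilinear.bounded_linear_left[OF bounded_bilinear_app]])
          have D1: "((\<lambda>s. \<eta> \<bullet> app (EE A (- s)) wv) has_vector_derivative \<eta> \<bullet> app (- (sq_of A * EE A (- \<tau>))) wv) (at \<tau>)"
            by (rule bounded_linear.has_vector_derivative[OF bl e1])
          have D2: "((\<lambda>s. \<eta> \<bullet> app (EE A (- s)) wv) has_vector_derivative 0) (at \<tau>)"
          proof (rule has_vector_derivative_transform_within_open[OF has_vector_derivative_const open_greaterThanLessThan \<tau>])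
            fix s assume "s \<in> {a<..<b}"
            then show "0 = \<eta> \<bullet> app (EE A (- s)) wv" using Suc.IH unfolding wv_def by simp
          qed
          have "\<eta> \<bullet> app (- (sq_of A * EE A (- \<tau>))) wv = 0"
            using vector_derivative_unique_at[OF D1 D2] .
          moreover have "app (- (sq_of A * EE A (- \<tau>))) wv = - app (EE A (- \<tau>)) (A *v wv)"
            by (simp add: bounded_bilinear.minus_left[OF bounded_bilinear_app] EE_commute[symmetric] app_mult)
          moreover have "A *v wv = (matpow A (Suc l) ** B) *v v"
            unfolding wv_def by (simp add: matrix_vector_mul_assoc matrix_mul_assoc)
          ultimately show "\<eta> \<bullet> app (EE A (- \<tau>)) ((matpow A (Suc l) ** B) *v v) = 0" by simp
        qed
      qed
      define \<tau>0 where "\<tau>0 = (a + b) / 2"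
      have \<tau>0: "\<tau>0 \<in> {a<..<b}" using ab unfolding \<tau>0_def by simp
      have KK: "\<eta> \<bullet> app (EE A (- \<tau>0)) k' = 0" if kk: "k' \<in> Kry A B" for k'
      proof -
        obtain y where k': "k' = (\<Sum>l<CARD('n). (matpow A l ** B) *v y l)"
          using kk by (auto simp: Kry_def kry_def)
        have "\<eta> \<bullet> app (EE A (- \<tau>0)) k' = (\<Sum>l<CARD('n). \<eta> \<bullet> app (EE A (- \<tau>0)) ((matpow A l ** B) *v y l))"
          unfolding k' by (simp only: bounded_bilinear.sum_right[OF bounded_bilinear_app] inner_sum_right)
        also have "\<dots> = 0" by (rule sum.neutral) (use Fl \<tau>0 in blast)
        finally show ?thesis .
      qed
      have "\<eta> \<bullet> app (EE A (- \<tau>0)) (app (EE A \<tau>0) k) = 0" by (rule KK[OF Kry_E[OF k]])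
      then show "\<eta> \<bullet> k = 0" by (simp add: app_mult[symmetric] EE_inv')
    qed
  qed
  have "app (EE A (- b)) w \<in> Kry A B" by (rule Kry_E[OF w])
  then have "app (EE A (- b)) w \<in> I ` U" using KR by (rule subsetD[rotated])
  then obtain u where u: "u \<in> U" "app (EE A (- b)) w = I u" by (rule imageE)
  have "app (EE A b) (I u) = w" unfolding u(2)[symmetric] by (simp add: app_mult[symmetric] EE_inv)
  moreover have "continuous_on UNIV u" "\<forall>\<tau>. \<tau> \<notin> {a<..<b} \<longrightarrow> u \<tau> = 0" using u(1) unfolding U_def by auto
  ultimately show ?thesis unfolding I_def by blast
qed

lemma foldl_mul:
  fixes F :: "nat \<Rightarrow> real^'n^'n" and M0 :: "real^'n^'n"
  shows "foldl (\<lambda>M j. M ** F j) M0 xs = M0 ** foldl (\<lambda>M j. M ** F j) (mat 1) xs"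
proof (induction xs arbitrary: M0)
  case Nil then show ?case by simp
next
  case (Cons a xs)
  have "foldl (\<lambda>M j. M ** F j) M0 (a # xs) = foldl (\<lambda>M j. M ** F j) (M0 ** F a) xs" by simp
  also have "\<dots> = (M0 ** F a) ** foldl (\<lambda>M j. M ** F j) (mat 1) xs" by (rule Cons.IH)
  also have "\<dots> = M0 ** (F a ** foldl (\<lambda>M j. M ** F j) (mat 1) xs)" by (simp add: matrix_mul_assoc)
  also have "F a ** foldl (\<lambda>M j. M ** F j) (mat 1) xs = foldl (\<lambda>M j. M ** F j) (mat 1) (a # xs)"
    using Cons.IH[of "mat 1 ** F a"] by simp
  finally show ?case .
qed

lemma trans_self: "transition A t q q = mat 1"
  by (simp add: transition_def)

lemma trans_Suc:
  fixes A :: "nat \<Rightarrow> real^'n^'n"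
  assumes "k \<le> q"
  shows "transition A t (Suc q) k = mat_exp (dt t (Suc q) *\<^sub>R A (Suc q)) ** transition A t q k"
proof -
  define E where "E = mat_exp (dt t (Suc q) *\<^sub>R A (Suc q))"
  define f where "f = (\<lambda>(M::real^'n^'n) j. M ** mat_exp (dt t j *\<^sub>R A j))"
  have l: "rev [Suc k..<Suc (Suc q)] = Suc q # rev [Suc k..<Suc q]" using assms by simp
  have "transition A t (Suc q) k = foldl f (mat 1 ** E) (rev [Suc k..<Suc q])"
    unfolding transition_def l f_def E_def by simp
  also have "\<dots> = (mat 1 ** E) ** foldl f (mat 1) (rev [Suc k..<Suc q])"
    unfolding f_def by (rule foldl_mul)
  also have "\<dots> = E ** transition A t q k" by (simp add: transition_def f_def)
  finally show ?thesis unfolding E_def .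
qed

lemma tca_eq: "temporal_ctrb_apply (A :: nat \<Rightarrow> real^'n^'n) B t q y =
   (\<Sum>k\<in>{1..q}. transition A t q k *v (\<Sum>l<CARD('n). (matpow (A k) l ** B) *v y k l))"
  unfolding temporal_ctrb_apply_def
  by (simp add: mv_sum matrix_vector_mul_assoc matrix_mul_assoc)

lemma mat_exp_dt: "mat_exp (dt t i *\<^sub>R A i) = mat_of (EE (A i) (t i - t (i - 1)))"
  by (simp add: dt_def mat_exp_EE)

lemma tmono:
  assumes inc: "\<And>i. i < p \<Longrightarrow> t i < t (Suc i)"
  shows "i \<le> j \<Longrightarrow> j \<le> p \<Longrightarrow> t i \<le> (t j :: real)"
proof (induction j)
  case 0 then show ?case by simp
next
  case (Suc j)
  show ?case
  proof (cases "i = Suc j")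
    case True then show ?thesis by simp
  next
    case False
    then have "t i \<le> t j" using Suc by simp
    also have "t j < t (Suc j)" using inc Suc.prems by simp
    finally show ?thesis by simp
  qed
qed

lemma herd_imp:
  fixes A :: "nat \<Rightarrow> real^'n^'n" and B :: "real^'m^'n" and t :: "nat \<Rightarrow> real" and p :: nat
  assumes inc: "\<And>i. i < p \<Longrightarrow> t i < t (Suc i)" and H: "completely_herdable A B t p"
  shows "\<exists>v :: real^'n. (\<forall>j. v $ j > 0) \<and> v \<in> temporal_ctrb_image A B t p"
proof -
  obtain u x where pc: "piecewise_continuous_on (t 0) (t p) u" and sol: "is_switching_solution A B t p u x"
    and x0: "x (t 0) = 0" and xh: "\<forall>j. x (t p) $ j \<ge> 1"
  proof -
    have "\<exists>u. piecewise_continuous_on (t 0) (t p) u \<and> (\<exists>x. is_switching_solution A B t p u x \<and> x (t 0) = 0 \<and> (\<forall>j. x (t p) $ j \<ge> 1))"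
      using H unfolding completely_herdable_def
      apply (erule_tac allE[of _ 0])
      apply (erule_tac allE[of _ 1])
      by simp
    then show ?thesis using that by blast
  qed
  obtain S where S: "finite S" "continuous_on ({t 0..t p} - S) u"
    using pc unfolding piecewise_continuous_on_def by blast
  have tm: "\<And>i j. i \<le> j \<Longrightarrow> j \<le> p \<Longrightarrow> t i \<le> t j" using tmono[of p t, OF inc] by blast
  have claim: "q \<le> p \<Longrightarrow> x (t q) \<in> temporal_ctrb_image A B t q" for q
  proof (induction q)
    case 0
    have "x (t 0) = temporal_ctrb_apply A B t 0 (\<lambda>_ _. 0)" by (simp add: x0 temporal_ctrb_apply_def)
    then show ?case unfolding temporal_ctrb_image_def by blast
  next
    case (Suc q)
    then obtain y where y: "x (t q) = temporal_ctrb_apply A B t q y"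
      unfolding temporal_ctrb_image_def by auto
    have ab: "t q \<le> t (Suc q)" using inc Suc.prems by (simp add: less_imp_le)
    have SqI: "Suc q \<in> {1..p}" using Suc.prems by simp
    then have "\<forall>s\<in>{t (Suc q - 1)..t (Suc q)}. ((\<lambda>\<tau>. A (Suc q) *v x \<tau> + B *v u \<tau>) has_integral (x s - x (t (Suc q - 1)))) {t (Suc q - 1)..s}"
      using sol unfolding is_switching_solution_def by blast
    then have soli: "\<forall>s\<in>{t q..t (Suc q)}. ((\<lambda>\<tau>. A (Suc q) *v x \<tau> + B *v u \<tau>) has_integral (x s - x (t q))) {t q..s}"
      by simp
    have uc: "isCont u \<tau>" if \<tau>: "\<tau> \<in> {t q<..<t (Suc q)} - S" for \<tau>
    proof -
      have "t 0 \<le> t q" "t (Suc q) \<le> t p" using tm Suc.prems by auto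
      then have "\<tau> \<in> {t 0<..<t p} - S" using \<tau> by auto
      moreover have "open ({t 0<..<t p} - S)" using S(1) by (intro open_Diff finite_imp_closed) auto
      moreover have "continuous_on ({t 0<..<t p} - S) u" by (rule continuous_on_subset[OF S(2)]) auto
      ultimately show "isCont u \<tau>" using continuous_on_eq_continuous_at by blast
    qed
    have "x (t (Suc q)) - app (EE (A (Suc q)) (t (Suc q) - t q)) (x (t q)) \<in> Kry (A (Suc q)) B"
      by (rule sol_step_in_Kry[OF ab soli S(1) uc])
    then obtain y' where y': "x (t (Suc q)) - app (EE (A (Suc q)) (t (Suc q) - t q)) (x (t q))
        = (\<Sum>l<CARD('n). (matpow (A (Suc q)) l ** B) *v y' l)"
      by (auto simp: Kry_def kry_def)
    define y'' where "y'' = y(Suc q := y')"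
    define E where "E = mat_exp (dt t (Suc q) *\<^sub>R A (Suc q))"
    have E: "app (EE (A (Suc q)) (t (Suc q) - t q)) v = E *v v" for v
      by (simp add: E_def mat_exp_dt app_def)
    have "temporal_ctrb_apply A B t (Suc q) y''
        = (\<Sum>k\<in>{1..Suc q}. transition A t (Suc q) k *v (\<Sum>l<CARD('n). (matpow (A k) l ** B) *v y'' k l))"
      by (rule tca_eq)
    also have "\<dots> = transition A t (Suc q) (Suc q) *v (\<Sum>l<CARD('n). (matpow (A (Suc q)) l ** B) *v y'' (Suc q) l)
        + (\<Sum>k\<in>{1..q}. transition A t (Suc q) k *v (\<Sum>l<CARD('n). (matpow (A k) l ** B) *v y'' k l))"
      by (simp add: atLeastAtMostSuc_conv)
    also have "(\<Sum>k\<in>{1..q}. transition A t (Suc q) k *v (\<Sum>l<CARD('n). (matpow (A k) l ** B) *v y'' k l))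
        = E *v temporal_ctrb_apply A B t q y"
      unfolding tca_eq mv_sum
      by (rule sum.cong) (auto simp: trans_Suc E_def y''_def matrix_vector_mul_assoc matrix_mul_assoc)
    also have "transition A t (Suc q) (Suc q) *v (\<Sum>l<CARD('n). (matpow (A (Suc q)) l ** B) *v y'' (Suc q) l)
        = x (t (Suc q)) - E *v x (t q)"
      using y' by (simp add: trans_self y''_def E)
    finally have "temporal_ctrb_apply A B t (Suc q) y'' = x (t (Suc q))" using y by simp
    then show ?case unfolding temporal_ctrb_image_def by (metis (mono_tags, lifting) mem_Collect_eq)
  qed
  have "x (t p) \<in> temporal_ctrb_image A B t p" by (rule claim) simp
  moreover have "\<forall>j. x (t p) $ j > 0" using xh by (meson less_le_trans zero_less_one)
  ultimately show ?thesis by blast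
qed

lemma imp_herd:
  fixes A :: "nat \<Rightarrow> real^'n^'n" and B :: "real^'m^'n" and t :: "nat \<Rightarrow> real" and p :: nat
  assumes inc: "\<And>i. i < p \<Longrightarrow> t i < t (Suc i)" and vpos: "\<forall>j. v $ j > 0"
    and vin: "v \<in> temporal_ctrb_image A B t p"
  shows "completely_herdable A B t p"
  unfolding completely_herdable_def
proof (intro allI impI)
  fix x0 :: "real^'n" and h :: real assume hpos: "h > 0"
  have tm: "\<And>i j. i \<le> j \<Longrightarrow> j \<le> p \<Longrightarrow> t i \<le> t j" using tmono[of p t, OF inc] by blast
  obtain y where vy: "v = temporal_ctrb_apply A B t p y" using vin unfolding temporal_ctrb_image_def by auto
  define W where "W = (\<lambda>k. \<Sum>l<CARD('n). (matpow (A k) l ** B) *v y k l)"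
  define z where "z = transition A t p 0 *v x0"
  define c where "c = (\<Sum>j\<in>UNIV. (\<bar>h\<bar> + \<bar>z $ j\<bar>) / v $ j)"
  define w where "w = (\<lambda>k. c *\<^sub>R W k)"
  have wK: "w k \<in> Kry (A k) B" for k
  proof -
    have "W k \<in> Kry (A k) B" unfolding W_def Kry_def kry_def by blast
    then show ?thesis unfolding w_def by (rule subspace_scale[OF Kry_subspace])
  qed
  have tlt: "t (k - 1) < t k" if "k \<in> {1..p}" for k
    using inc[of "k - 1"] that by (cases k) auto
  define P where "P = (\<lambda>k uk. continuous_on UNIV uk \<and> (\<forall>\<tau>. \<tau> \<notin> {t (k - 1)<..<t k} \<longrightarrow> uk \<tau> = 0) \<and>
      app (EE (A k) (t k)) (integral {t (k - 1)..t k} (\<lambda>\<tau>. app (EE (A k) (- \<tau>)) (B *v uk \<tau>))) = w k)"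
  have "\<forall>k. \<exists>uk. k \<in> {1..p} \<longrightarrow> P k uk"
  proof
    fix k show "\<exists>uk. k \<in> {1..p} \<longrightarrow> P k uk"
    proof (cases "k \<in> {1..p}")
      case True
      obtain uk where "continuous_on UNIV uk" "\<forall>\<tau>. \<tau> \<notin> {t (k - 1)<..<t k} \<longrightarrow> uk \<tau> = 0"
         "app (EE (A k) (t k)) (integral {t (k - 1)..t k} (\<lambda>\<tau>. app (EE (A k) (- \<tau>)) (B *v uk \<tau>))) = w k"
        using reach[OF tlt[OF True] wK[of k]] by blast
      then have "P k uk" unfolding P_def by blast
      then show ?thesis by blast
    next
      case False then show ?thesis by blast
    qed
  qed
  then obtain U where U0: "\<forall>k. k \<in> {1..p} \<longrightarrow> P k (U k)" by (rule choice[THEN exE])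
  have U: "continuous_on UNIV (U k) \<and> (\<forall>\<tau>. \<tau> \<notin> {t (k - 1)<..<t k} \<longrightarrow> U k \<tau> = 0) \<and>
      app (EE (A k) (t k)) (integral {t (k - 1)..t k} (\<lambda>\<tau>. app (EE (A k) (- \<tau>)) (B *v U k \<tau>))) = w k"
    if "k \<in> {1..p}" for k
    using U0 that unfolding P_def by blast
  define u where "u = (\<lambda>\<tau>. \<Sum>k\<in>{1..p}. U k \<tau>)"
  have ucont: "continuous_on UNIV u" unfolding u_def using U by (intro continuous_on_sum) auto
  have ueq: "u \<tau> = U i \<tau>" if i: "i \<in> {1..p}" and \<tau>: "\<tau> \<in> {t (i - 1)..t i}" for i \<tau>
  proof -
    have "U k \<tau> = 0" if k: "k \<in> {1..p} - {i}" for k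
    proof -
      have "\<tau> \<notin> {t (k - 1)<..<t k}"
      proof (cases "k < i")
        case True
        then have "t k \<le> t (i - 1)" using tm k i by auto
        then show ?thesis using \<tau> by auto
      next
        case False
        then have "i < k" using k by auto
        then have "t i \<le> t (k - 1)" using tm k i by auto
        then show ?thesis using \<tau> by auto
      qed
      then show ?thesis using U k by auto
    qed
    then have "(\<Sum>k\<in>{1..p} - {i}. U k \<tau>) = 0" by (rule sum.neutral[OF ballI])
    moreover have "u \<tau> = U i \<tau> + (\<Sum>k\<in>{1..p} - {i}. U k \<tau>)"
      unfolding u_def by (rule sum.remove[OF finite_atLeastAtMost i])
    ultimately show ?thesis by simp
  qed
  have claim: "q \<le> p \<Longrightarrow> \<exists>x. (\<forall>i\<in>{1..q}. \<forall>s\<in>{t (i - 1)..t i}.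
      ((\<lambda>\<tau>. A i *v x \<tau> + B *v u \<tau>) has_integral (x s - x (t (i - 1)))) {t (i - 1)..s}) \<and>
      x (t 0) = x0 \<and> x (t q) = transition A t q 0 *v x0 + (\<Sum>k\<in>{1..q}. transition A t q k *v w k)" for q
  proof (induction q)
    case 0 show ?case by (rule exI[of _ "\<lambda>_. x0"]) (simp add: trans_self)
  next
    case (Suc q)
    then obtain x where xi: "\<forall>i\<in>{1..q}. \<forall>s\<in>{t (i - 1)..t i}.
      ((\<lambda>\<tau>. A i *v x \<tau> + B *v u \<tau>) has_integral (x s - x (t (i - 1)))) {t (i - 1)..s}"
      and xt0: "x (t 0) = x0" and xq: "x (t q) = transition A t q 0 *v x0 + (\<Sum>k\<in>{1..q}. transition A t q k *v w k)"
      by auto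
    have ab: "t q < t (Suc q)" using inc Suc.prems by simp
    obtain yy where yy: "\<forall>s\<in>{t q..t (Suc q)}. ((\<lambda>\<tau>. A (Suc q) *v yy \<tau> + B *v u \<tau>) has_integral (yy s - yy (t q))) {t q..s}"
      "yy (t q) = x (t q)"
      "yy (t (Suc q)) = app (EE (A (Suc q)) (t (Suc q) - t q)) (x (t q)) + app (EE (A (Suc q)) (t (Suc q)))
          (integral {t q..t (Suc q)} (\<lambda>\<tau>. app (EE (A (Suc q)) (- \<tau>)) (B *v u \<tau>)))"
      using sol_exists[OF less_imp_le[OF ab] ucont, of "A (Suc q)" B "x (t q)"] by blast
    have SqI: "Suc q \<in> {1..p}" using Suc.prems by simp
    have "integral {t q..t (Suc q)} (\<lambda>\<tau>. app (EE (A (Suc q)) (- \<tau>)) (B *v u \<tau>))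
        = integral {t q..t (Suc q)} (\<lambda>\<tau>. app (EE (A (Suc q)) (- \<tau>)) (B *v U (Suc q) \<tau>))"
      by (rule integral_cong) (use ueq[OF SqI] in simp)
    then have yyb: "yy (t (Suc q)) = app (EE (A (Suc q)) (t (Suc q) - t q)) (x (t q)) + w (Suc q)"
      using yy(3) U[OF SqI] by simp
    define x' where "x' = (\<lambda>s. if s \<le> t q then x s else yy s)"
    show ?case
    proof (intro exI[of _ x'] conjI ballI)
      fix i s assume i: "i \<in> {1..Suc q}" and s: "s \<in> {t (i - 1)..t i}"
      show "((\<lambda>\<tau>. A i *v x' \<tau> + B *v u \<tau>) has_integral (x' s - x' (t (i - 1)))) {t (i - 1)..s}"
      proof (cases "i \<le> q")
        case True
        have tiq: "t i \<le> t q" using tm True Suc.prems by auto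
        have hi: "((\<lambda>\<tau>. A i *v x \<tau> + B *v u \<tau>) has_integral (x s - x (t (i - 1)))) {t (i - 1)..s}"
          using xi True i s by auto
        have sq: "s \<le> t q" "t (i - 1) \<le> t q" using s tiq by auto
        have eqs: "x' s - x' (t (i - 1)) = x s - x (t (i - 1))" using sq by (simp add: x'_def)
        show ?thesis unfolding eqs
        proof (rule has_integral_eq[OF _ hi])
          fix \<tau> assume "\<tau> \<in> {t (i - 1)..s}"
          then have "\<tau> \<le> t q" using sq by simp
          then show "A i *v x \<tau> + B *v u \<tau> = A i *v x' \<tau> + B *v u \<tau>" by (simp add: x'_def)
        qed
      next
        case False
        then have iq: "i = Suc q" using i by auto
        have hi: "((\<lambda>\<tau>. A i *v yy \<tau> + B *v u \<tau>) has_integral (yy s - yy (t (i - 1)))) {t (i - 1)..s}"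
          using yy(1) s iq by auto
        have eqy: "x' \<tau> = yy \<tau>" if "\<tau> \<ge> t q" for \<tau>
        proof (cases "\<tau> \<le> t q")
          case True then have "\<tau> = t q" using that by simp
          then show ?thesis using yy(2) by (simp add: x'_def)
        next
          case False then show ?thesis by (simp add: x'_def)
        qed
        have sq: "s \<ge> t q" "t (i - 1) = t q" using s iq by auto
        have eqs: "x' s - x' (t (i - 1)) = yy s - yy (t (i - 1))" using sq eqy by simp
        show ?thesis unfolding eqs
        proof (rule has_integral_eq[OF _ hi])
          fix \<tau> assume "\<tau> \<in> {t (i - 1)..s}"
          then have "\<tau> \<ge> t q" using sq by simp
          then show "A i *v yy \<tau> + B *v u \<tau> = A i *v x' \<tau> + B *v u \<tau>" by (simp add: eqy)
        qed
      qed
    next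
      have "t 0 \<le> t q" using tm Suc.prems by auto
      then show "x' (t 0) = x0" using xt0 by (simp add: x'_def)
    next
      define E where "E = mat_exp (dt t (Suc q) *\<^sub>R A (Suc q))"
      have E: "app (EE (A (Suc q)) (t (Suc q) - t q)) v = E *v v" for v
        by (simp add: E_def mat_exp_dt app_def)
      have "x' (t (Suc q)) = yy (t (Suc q))" using ab by (simp add: x'_def)
      also have "\<dots> = E *v (transition A t q 0 *v x0 + (\<Sum>k\<in>{1..q}. transition A t q k *v w k)) + w (Suc q)"
        using yyb xq E by simp
      also have "\<dots> = transition A t (Suc q) 0 *v x0 + (\<Sum>k\<in>{1..Suc q}. transition A t (Suc q) k *v w k)"
      proof -
        have m1: "E *v (\<Sum>k\<in>{1..q}. transition A t q k *v w k) = (\<Sum>k\<in>{1..q}. transition A t (Suc q) k *v w k)"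
          unfolding mv_sum by (rule sum.cong) (auto simp: trans_Suc E_def matrix_vector_mul_assoc)
        have m2: "E *v (transition A t q 0 *v x0) = transition A t (Suc q) 0 *v x0"
          by (simp add: trans_Suc E_def matrix_vector_mul_assoc)
        have r: "(\<Sum>k\<in>{1..Suc q}. transition A t (Suc q) k *v w k) = w (Suc q) + (\<Sum>k\<in>{1..q}. transition A t (Suc q) k *v w k)"
          by (simp add: atLeastAtMostSuc_conv trans_self)
        show ?thesis unfolding matrix_vector_right_distrib m1 m2 r by (simp add: ac_simps)
      qed
      finally show "x' (t (Suc q)) = transition A t (Suc q) 0 *v x0 + (\<Sum>k\<in>{1..Suc q}. transition A t (Suc q) k *v w k)" .
    qed
  qed
  obtain x where xi: "\<forall>i\<in>{1..p}. \<forall>s\<in>{t (i - 1)..t i}.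
      ((\<lambda>\<tau>. A i *v x \<tau> + B *v u \<tau>) has_integral (x s - x (t (i - 1)))) {t (i - 1)..s}"
    and xt0: "x (t 0) = x0" and xp: "x (t p) = transition A t p 0 *v x0 + (\<Sum>k\<in>{1..p}. transition A t p k *v w k)"
    using claim[of p] by auto
  have "(\<Sum>k\<in>{1..p}. transition A t p k *v w k) = c *\<^sub>R (\<Sum>k\<in>{1..p}. transition A t p k *v W k)"
    unfolding w_def by (simp add: matrix_vector_mult_scaleR scaleR_sum_right)
  also have "(\<Sum>k\<in>{1..p}. transition A t p k *v W k) = v"
    unfolding vy tca_eq W_def ..
  finally have "(\<Sum>k\<in>{1..p}. transition A t p k *v w k) = c *\<^sub>R v" .
  then have xp': "x (t p) = z + c *\<^sub>R v" using xp by (simp add: z_def)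
  have bound: "x (t p) $ j \<ge> h" for j
  proof -
    have nn: "0 \<le> (\<bar>h\<bar> + \<bar>z $ i\<bar>) / v $ i" for i using vpos[rule_format, of i] by simp
    have "(\<bar>h\<bar> + \<bar>z $ j\<bar>) / v $ j \<le> c" unfolding c_def
      by (rule member_le_sum) (use nn in auto)
    then have "(\<bar>h\<bar> + \<bar>z $ j\<bar>) / v $ j * v $ j \<le> c * v $ j"
      using vpos[rule_format, of j] by (intro mult_right_mono) auto
    then have "\<bar>h\<bar> + \<bar>z $ j\<bar> \<le> c * v $ j" using vpos[rule_format, of j] by simp
    then show ?thesis unfolding xp' by simp
  qed
  show "\<exists>u. piecewise_continuous_on (t 0) (t p) u \<and>
      (\<exists>x. is_switching_solution A B t p u x \<and> x (t 0) = x0 \<and> (\<forall>j. h \<le> x (t p) $ j))"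
  proof (intro exI conjI)
    show "piecewise_continuous_on (t 0) (t p) u"
      unfolding piecewise_continuous_on_def
      by (intro exI[of _ "{}"]) (auto intro: continuous_on_subset[OF ucont])
    show "is_switching_solution A B t p u x" unfolding is_switching_solution_def using xi by blast
    show "x (t 0) = x0" by (rule xt0)
    show "\<forall>j. h \<le> x (t p) $ j" using bound by blast
  qed
qed

theorem mainTheorem1:
  fixes A :: "nat \<Rightarrow> real^'n^'n" and B :: "real^'m^'n"
    and t :: "nat \<Rightarrow> real" and p :: nat
  assumes "p \<ge> 1"
    and "\<And>i. i < p \<Longrightarrow> t i < t (Suc i)"
  shows "completely_herdable A B t p \<longleftrightarrow>
         (\<exists>v :: real^'n. (\<forall>j. v $ j > 0) \<and> v \<in> temporal_ctrb_image A B t p)"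
  using herd_imp[of p t A B, OF assms(2)] imp_herd[of p t, OF assms(2)] by blast

end
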